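(* In $\mathcal{A}_q(1,4)$ we have $X_\delta=q^{-1}X_4^2X_1-q^{-2}\big(q^{-1}X_3+q^{-\frac12}+q^{\frac12}\big)X_2^2$.
   Context: Let $\mathcal{T}$ be the quantum torus over $\mathbb{Z}[q^{\pm\frac12}]$ generated by $X_1^{\pm1},X_2^{\pm1}$ with $X_1X_2=qX_2X_1$, with skew field of fractions $\mathcal{F}$. Define $X_k\in\mathcal{F}$ ($k\in\mathbb{Z}$) by $X_{k-1}X_{k+1}=q^{\frac12}X_k+1$ for $k$ odd and $X_{k-1}X_{k+1}=q^2X_k^4+1$ for $k$ even; $\mathcal{A}_q(1,4)$ is the $\mathbb{Z}[q^{\pm\frac12}]$-subalgebra of $\mathcal{F}$ generated by all $X_k$. Put $X^{(a,b)}=q^{-\frac12ab}X_1^aX_2^b$ and $X_\delta=X^{(-1,-2)}+X^{(-1,2)}+X^{(1,-2)}+(q^{-\frac12}+q^{\frac12})X^{(0,-2)}$. *)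

theory Defs
  imports "HOL-Library.Poly_Mapping"
begin

text \<open>Quantum torus T over Z[t, t^-1] with t = q^(1/2), generated by X1^{+-1}, X2^{+-1}
  with X1 X2 = q X2 X1.  An element is a finitely supported integer combination of the
  basis monomials t^c X1^a X2^b, encoded by the key (c, a, b) :: int * int * int.
  Since X2^b X1^a' = q^(-b a') X1^a' X2^b, the product of basis monomials is
  (c, a, b) * (c', a', b') = (c + c' - 2 b a', a + a', b + b').\<close>

type_synonym qtorus = "(int \<times> int \<times> int) \<Rightarrow>\<^sub>0 int"

definition tw :: "int \<times> int \<times> int \<Rightarrow> int \<times> int \<times> int \<Rightarrow> int \<times> int \<times> int" where
  "tw u v = (case u of (c, a, b) \<Rightarrow> case v of (c', a', b') \<Rightarrow>
              (c + c' - 2 * b * a', a + a', b + b'))"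

definition qmult :: "qtorus \<Rightarrow> qtorus \<Rightarrow> qtorus" (infixl "\<odot>" 70) where
  "p \<odot> r = (\<Sum>u\<in>Poly_Mapping.keys p. \<Sum>v\<in>Poly_Mapping.keys r. Poly_Mapping.single (tw u v) (Poly_Mapping.lookup p u * Poly_Mapping.lookup r v))"

definition mon :: "int \<Rightarrow> int \<Rightarrow> int \<Rightarrow> qtorus" where
  "mon c a b = Poly_Mapping.single (c, a, b) 1"

definition tpow :: "int \<Rightarrow> qtorus" where
  "tpow c = mon c 0 0"

definition qone :: qtorus where "qone = mon 0 0 0"

definition X1 :: qtorus where "X1 = mon 0 1 0"
definition X2 :: qtorus where "X2 = mon 0 0 1"

text \<open>X^(a,b) = q^(-ab/2) X1^a X2^b\<close>
definition Xv :: "int \<Rightarrow> int \<Rightarrow> qtorus" where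
  "Xv a b = mon (- (a * b)) a b"

definition Xdelta :: qtorus where
  "Xdelta = Xv (-1) (-2) + Xv (-1) 2 + Xv 1 (-2) + (tpow (-1) + tpow 1) \<odot> Xv 0 (-2)"

end

theory Submission
  imports Defs
begin

lemma qmult_sets:
  assumes "finite A" "finite B" "Poly_Mapping.keys p \<subseteq> A" "Poly_Mapping.keys r \<subseteq> B"
  shows "p \<odot> r = (\<Sum>u\<in>A. \<Sum>v\<in>B. Poly_Mapping.single (tw u v) (Poly_Mapping.lookup p u * Poly_Mapping.lookup r v))"
proof -
  have "p \<odot> r = (\<Sum>u\<in>A. \<Sum>v\<in>Poly_Mapping.keys r. Poly_Mapping.single (tw u v) (Poly_Mapping.lookup p u * Poly_Mapping.lookup r v))"
    unfolding qmult_def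
    by (rule sum.mono_neutral_left) (use assms in \<open>auto simp: in_keys_iff\<close>)
  also have "\<dots> = (\<Sum>u\<in>A. \<Sum>v\<in>B. Poly_Mapping.single (tw u v) (Poly_Mapping.lookup p u * Poly_Mapping.lookup r v))"
    by (rule sum.cong[OF refl], rule sum.mono_neutral_left) (use assms in \<open>auto simp: in_keys_iff\<close>)
  finally show ?thesis .
qed

lemma keys_add_sub: "Poly_Mapping.keys (p + q) \<subseteq> Poly_Mapping.keys p \<union> Poly_Mapping.keys (q::qtorus)"
  by (auto simp: in_keys_iff lookup_add)

lemma qmult_add_left: "(p + q) \<odot> r = p \<odot> r + q \<odot> r"
proof -
  let ?A = "Poly_Mapping.keys p \<union> Poly_Mapping.keys q" and ?B = "Poly_Mapping.keys r"
  have "(p + q) \<odot> r = (\<Sum>u\<in>?A. \<Sum>v\<in>?B. Poly_Mapping.single (tw u v) (Poly_Mapping.lookup (p+q) u * Poly_Mapping.lookup r v))"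
    by (rule qmult_sets) (auto simp: keys_add_sub)
  moreover have "p \<odot> r = (\<Sum>u\<in>?A. \<Sum>v\<in>?B. Poly_Mapping.single (tw u v) (Poly_Mapping.lookup p u * Poly_Mapping.lookup r v))"
    by (rule qmult_sets) auto
  moreover have "q \<odot> r = (\<Sum>u\<in>?A. \<Sum>v\<in>?B. Poly_Mapping.single (tw u v) (Poly_Mapping.lookup q u * Poly_Mapping.lookup r v))"
    by (rule qmult_sets) auto
  ultimately show ?thesis
    by (simp add: lookup_add distrib_right single_add sum.distrib)
qed

lemma qmult_add_right: "r \<odot> (p + q) = r \<odot> p + r \<odot> q"
proof -
  let ?B = "Poly_Mapping.keys p \<union> Poly_Mapping.keys q" and ?A = "Poly_Mapping.keys r"
  have "r \<odot> (p + q) = (\<Sum>u\<in>?A. \<Sum>v\<in>?B. Poly_Mapping.single (tw u v) (Poly_Mapping.lookup r u * Poly_Mapping.lookup (p+q) v))"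
    by (rule qmult_sets) (auto simp: keys_add_sub)
  moreover have "r \<odot> p = (\<Sum>u\<in>?A. \<Sum>v\<in>?B. Poly_Mapping.single (tw u v) (Poly_Mapping.lookup r u * Poly_Mapping.lookup p v))"
    by (rule qmult_sets) auto
  moreover have "r \<odot> q = (\<Sum>u\<in>?A. \<Sum>v\<in>?B. Poly_Mapping.single (tw u v) (Poly_Mapping.lookup r u * Poly_Mapping.lookup q v))"
    by (rule qmult_sets) auto
  ultimately show ?thesis
    by (simp add: lookup_add distrib_left single_add sum.distrib)
qed

lemma qmult_zero_left[simp]: "0 \<odot> r = 0" by (simp add: qmult_def)
lemma qmult_zero_right[simp]: "r \<odot> 0 = 0" by (simp add: qmult_def)

lemma qmult_minus_left: "(- p) \<odot> r = - (p \<odot> r)"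
proof -
  have "p \<odot> r + (- p) \<odot> r = 0" by (simp only: qmult_add_left[symmetric] add.right_inverse qmult_zero_left)
  then show ?thesis by (simp add: eq_neg_iff_add_eq_0 add.commute)
qed
lemma qmult_minus_right: "r \<odot> (- p) = - (r \<odot> p)"
proof -
  have "r \<odot> p + r \<odot> (- p) = 0" by (simp only: qmult_add_right[symmetric] add.right_inverse qmult_zero_right)
  then show ?thesis by (simp add: eq_neg_iff_add_eq_0 add.commute)
qed
lemma qmult_diff_left: "(p - q) \<odot> r = p \<odot> r - q \<odot> r"
  by (simp only: diff_conv_add_uminus qmult_add_left qmult_minus_left)
lemma qmult_diff_right: "r \<odot> (p - q) = r \<odot> p - r \<odot> q"
  by (simp only: diff_conv_add_uminus qmult_add_right qmult_minus_right)

lemma qmult_sum_left: "(\<Sum>i\<in>I. f i) \<odot> r = (\<Sum>i\<in>I. f i \<odot> r)"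
  by (induction I rule: infinite_finite_induct) (auto simp: qmult_add_left)
lemma qmult_sum_right: "r \<odot> (\<Sum>i\<in>I. f i) = (\<Sum>i\<in>I. r \<odot> f i)"
  by (induction I rule: infinite_finite_induct) (auto simp: qmult_add_right)

lemma single_qmult: "Poly_Mapping.single u a \<odot> Poly_Mapping.single v b = Poly_Mapping.single (tw u v) (a * b)"
proof -
  have "Poly_Mapping.single u a \<odot> Poly_Mapping.single v b =
    (\<Sum>u'\<in>{u}. \<Sum>v'\<in>{v}. Poly_Mapping.single (tw u' v') (Poly_Mapping.lookup (Poly_Mapping.single u a) u' * Poly_Mapping.lookup (Poly_Mapping.single v b) v'))"
    by (rule qmult_sets) auto
  then show ?thesis by simp
qed

lemma decomp: "p = (\<Sum>u\<in>Poly_Mapping.keys p. Poly_Mapping.single u (Poly_Mapping.lookup p u))"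
proof (rule poly_mapping_eqI)
  fix k
  show "Poly_Mapping.lookup p k = Poly_Mapping.lookup (\<Sum>u\<in>Poly_Mapping.keys p. Poly_Mapping.single u (Poly_Mapping.lookup p u)) k"
    by (cases "k \<in> Poly_Mapping.keys p")
       (auto simp: lookup_sum lookup_single when_def in_keys_iff sum.delta)
qed

lemma tw_assoc: "tw (tw u v) w = tw u (tw v w)"
  by (cases u; cases v; cases w) (simp add: tw_def algebra_simps)

lemma qmult_assoc: "(p \<odot> q) \<odot> r = p \<odot> (q \<odot> r)"
proof -
  define P where "P = (\<Sum>u\<in>Poly_Mapping.keys p. Poly_Mapping.single u (Poly_Mapping.lookup p u))"
  define Q where "Q = (\<Sum>u\<in>Poly_Mapping.keys q. Poly_Mapping.single u (Poly_Mapping.lookup q u))"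
  define R where "R = (\<Sum>u\<in>Poly_Mapping.keys r. Poly_Mapping.single u (Poly_Mapping.lookup r u))"
  have e: "p = P" "q = Q" "r = R" unfolding P_def Q_def R_def by (rule decomp)+
  have "(P \<odot> Q) \<odot> R = (\<Sum>w\<in>Poly_Mapping.keys r. \<Sum>v\<in>Poly_Mapping.keys q. \<Sum>u\<in>Poly_Mapping.keys p.
     Poly_Mapping.single (tw (tw u v) w) (Poly_Mapping.lookup p u * Poly_Mapping.lookup q v * Poly_Mapping.lookup r w))"
    unfolding P_def Q_def R_def
    by (simp add: qmult_sum_left qmult_sum_right single_qmult)
  moreover have "P \<odot> (Q \<odot> R) = (\<Sum>w\<in>Poly_Mapping.keys r. \<Sum>v\<in>Poly_Mapping.keys q. \<Sum>u\<in>Poly_Mapping.keys p.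
     Poly_Mapping.single (tw (tw u v) w) (Poly_Mapping.lookup p u * Poly_Mapping.lookup q v * Poly_Mapping.lookup r w))"
    unfolding P_def Q_def R_def
    by (simp add: qmult_sum_left qmult_sum_right single_qmult tw_assoc mult.assoc)
  ultimately show ?thesis using e by simp
qed

lemma mon_mult[simp]: "mon c a b \<odot> mon c' a' b' = mon (c + c' - 2 * b * a') (a + a') (b + b')"
  by (simp add: mon_def single_qmult tw_def)

lemma qone_left: "mon 0 0 0 \<odot> p = p"
proof -
  have "mon 0 0 0 \<odot> (\<Sum>u\<in>Poly_Mapping.keys p. Poly_Mapping.single u (Poly_Mapping.lookup p u))
     = (\<Sum>u\<in>Poly_Mapping.keys p. Poly_Mapping.single u (Poly_Mapping.lookup p u))"
    by (simp add: qmult_sum_right mon_def single_qmult tw_def split_beta)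
  then show ?thesis using decomp[of p] by simp
qed

lemma lookup_mon: "Poly_Mapping.lookup (mon c a b) k = (if k = (c, a, b) then 1 else 0)"
  by (simp add: mon_def lookup_single when_def)

theorem lemma3p1:
  fixes X3 X4 :: qtorus
  assumes "X1 \<odot> X3 = tpow 4 \<odot> (X2 \<odot> X2 \<odot> X2 \<odot> X2) + qone"
      and "X2 \<odot> X4 = tpow 1 \<odot> X3 + qone"
  shows "Xdelta = tpow (-2) \<odot> (X4 \<odot> X4 \<odot> X1)
                  - tpow (-4) \<odot> ((tpow (-2) \<odot> X3 + tpow (-1) + tpow 1) \<odot> (X2 \<odot> X2))"
proof -
  have "X3 = mon 0 (-1) 0 \<odot> (X1 \<odot> X3)"
    by (simp add: qmult_assoc[symmetric] X1_def qone_left)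
  also have "\<dots> = mon 4 (-1) 4 + mon 0 (-1) 0"
    unfolding assms(1) by (simp add: tpow_def X2_def qone_def qmult_add_right)
  finally have h3: "X3 = mon 4 (-1) 4 + mon 0 (-1) 0" .
  have "X4 = mon 0 0 (-1) \<odot> (X2 \<odot> X4)"
    by (simp add: qmult_assoc[symmetric] X2_def qone_left)
  also have "\<dots> = mon 3 (-1) 3 + mon (-1) (-1) (-1) + mon 0 0 (-1)"
    unfolding assms(2) h3 by (simp add: tpow_def qone_def qmult_add_right qmult_add_left)
  finally have h4: "X4 = mon 3 (-1) 3 + mon (-1) (-1) (-1) + mon 0 0 (-1)" .
  show ?thesis
    unfolding h3 h4
    by (simp add: Xdelta_def Xv_def tpow_def X1_def X2_def qmult_add_right qmult_add_left qmult_diff_left qmult_diff_right)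
qed

end
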